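(* Let $k$ be a positive integer and let $a_1\ge a_2\ge\cdots\ge a_{k+1}$ and $b_1\ge b_2\ge\cdots\ge b_{k+1}$ be real numbers in $[a,b]$ with $a_1\ge b_1$ and $(-1)^k a_{k+1}\le(-1)^k b_{k+1}$, such that $\sum_{i=1}^{k+1}a_i^j=\sum_{i=1}^{k+1}b_i^j$ for all integers $1\le j<k$. Then \[ \sum_{i=1}^{k+1}f(a_i)\ge\sum_{i=1}^{k+1}f(b_i) \] for every $k$ times differentiable $f:[a,b]\to\mathbb{R}$ with $f^{(k)}\ge 0$. *)

theory Defs
  imports Complex_Main
begin

definition k_times_differentiable_on ::
  "nat \<Rightarrow> (nat \<Rightarrow> real \<Rightarrow> real) \<Rightarrow> real set \<Rightarrow> bool" where
  "k_times_differentiable_on k D S \<longleftrightarrow>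
     (\<forall>m<k. \<forall>x\<in>S. (D m has_real_derivative D (Suc m) x) (at x within S))"

end

theory Submission
  imports Defs "HOL-Analysis.Analysis" "HOL-Computational_Algebra.Polynomial"
begin


lemma gen_rolle:
  fixes Phi :: "nat \<Rightarrow> real \<Rightarrow> real"
  assumes "\<forall>m<n. \<forall>x\<in>{lo..hi}. (Phi m has_real_derivative Phi (Suc m) x) (at x within {lo..hi})"
    and "finite Z" "Z \<subseteq> {lo..hi}" "card Z = Suc n" "\<forall>z\<in>Z. Phi 0 z = 0"
  shows "\<exists>\<xi>\<in>{lo..hi}. Phi n \<xi> = 0"
  using assms
proof (induction n arbitrary: Phi Z)
  case 0
  have "Z \<noteq> {}" using 0(4) by auto
  then obtain z where "z \<in> Z" by blast
  then show ?case using 0 by blast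
next
  case (Suc n)
  define xs where "xs = sorted_list_of_set Z"
  have sw: "sorted_wrt (<) xs" and len: "length xs = Suc (Suc n)" and setxs: "set xs = Z"
    using Suc.prems(2,4) unfolding xs_def
    by (simp_all add: strict_sorted_list_of_set length_sorted_list_of_set)
  have lt: "xs ! i < xs ! j" if "i < j" "j < Suc (Suc n)" for i j
    using sorted_wrt_nth_less[OF sw that(1)] that(2) len by simp
  have inZ: "xs ! i \<in> Z" if "i < Suc (Suc n)" for i
    using nth_mem[of i xs] that len setxs by simp
  have "\<forall>i<Suc n. \<exists>z. xs ! i < z \<and> z < xs ! Suc i \<and> Phi 1 z = 0"
  proof (intro allI impI)
    fix i assume i: "i < Suc n"
    let ?u = "xs ! i" and ?v = "xs ! Suc i"
    have uv: "?u < ?v" using lt i by simp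
    have u: "?u \<in> {lo..hi}" using inZ[of i] i Suc.prems(3) by (meson in_mono less_SucI)
    have v: "?v \<in> {lo..hi}" using inZ[of "Suc i"] i Suc.prems(3) by (meson in_mono Suc_mono)
    have der: "(Phi 0 has_real_derivative Phi 1 x) (at x within {lo..hi})" if "x \<in> {lo..hi}" for x
      using Suc.prems(1)[rule_format, of 0 x] that by (simp add: One_nat_def)
    have cont: "continuous_on {?u..?v} (Phi 0)"
    proof -
      have "continuous_on {lo..hi} (Phi 0)"
        unfolding continuous_on_eq_continuous_within using der DERIV_continuous by blast
      moreover have "{?u..?v} \<subseteq> {lo..hi}" using u v by auto
      ultimately show ?thesis by (rule continuous_on_subset)
    qed
    have "\<exists>z. ?u < z \<and> z < ?v \<and> DERIV (Phi 0) z :> 0"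
    proof (rule Rolle[OF uv])
      show "Phi 0 ?u = Phi 0 ?v" using Suc.prems(5) inZ i by simp
      show "continuous_on {?u..?v} (Phi 0)" by (rule cont)
      fix x assume "?u < x" "x < ?v"
      then have "lo < x" "x < hi" using u v by auto
      then have "(Phi 0 has_real_derivative Phi 1 x) (at x)"
        using der[of x] at_within_Icc_at by fastforce
      then show "Phi 0 differentiable (at x)" using real_differentiable_def by blast
    qed
    then obtain z where z: "?u < z" "z < ?v" "DERIV (Phi 0) z :> 0" by blast
    have "lo < z" "z < hi" using z u v by auto
    then have "(Phi 0 has_real_derivative Phi 1 z) (at z)"
      using der[of z] at_within_Icc_at by fastforce
    then have "Phi 1 z = 0" using z(3) DERIV_unique by blast
    then show "\<exists>z. ?u < z \<and> z < ?v \<and> Phi 1 z = 0" using z by blast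
  qed
  then obtain \<xi> where xi: "\<And>i. i < Suc n \<Longrightarrow> xs ! i < \<xi> i \<and> \<xi> i < xs ! Suc i \<and> Phi 1 (\<xi> i) = 0"
    by metis
  have mono: "\<xi> i < \<xi> j" if "i < j" "j < Suc n" for i j
  proof -
    have "\<xi> i < xs ! Suc i" using xi that by auto
    also have "xs ! Suc i \<le> xs ! j" using lt[of "Suc i" j] that by (cases "Suc i = j") auto
    also have "xs ! j < \<xi> j" using xi that by auto
    finally show ?thesis .
  qed
  have inj: "inj_on \<xi> {..<Suc n}"
  proof (rule inj_onI)
    fix i j assume "i \<in> {..<Suc n}" "j \<in> {..<Suc n}" "\<xi> i = \<xi> j"
    then show "i = j" using mono[of i j] mono[of j i] by (cases i j rule: linorder_cases) auto
  qed
  let ?Z = "\<xi> ` {..<Suc n}"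
  have "\<exists>\<xi>'\<in>{lo..hi}. (\<lambda>m. Phi (Suc m)) n \<xi>' = 0"
  proof (rule Suc.IH)
    show "\<forall>m<n. \<forall>x\<in>{lo..hi}. ((\<lambda>m. Phi (Suc m)) m has_real_derivative (\<lambda>m. Phi (Suc m)) (Suc m) x) (at x within {lo..hi})"
      using Suc.prems(1) by auto
    show "finite ?Z" by simp
    show "?Z \<subseteq> {lo..hi}"
    proof
      fix y assume "y \<in> ?Z"
      then obtain i where i: "i < Suc n" "y = \<xi> i" by auto
      have a1: "xs ! i \<in> {lo..hi}" using inZ[of i] i Suc.prems(3) by (meson in_mono less_SucI)
      have a2: "xs ! Suc i \<in> {lo..hi}" using inZ[of "Suc i"] i Suc.prems(3) by (meson in_mono Suc_mono)
      show "y \<in> {lo..hi}" using a1 a2 xi[OF i(1)] i(2) by auto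
    qed
    show "card ?Z = Suc n" using card_image[OF inj] by simp
    show "\<forall>z\<in>?Z. (\<lambda>m. Phi (Suc m)) 0 z = 0" using xi by auto
  qed
  then show ?case by simp
qed

lemma pderiv_funpow_const:
  fixes p :: "real poly"
  assumes "degree p \<le> n"
  shows "(pderiv ^^ n) p = [:fact n * coeff p n:]"
  using assms
proof (induction n arbitrary: p)
  case 0
  then show ?case using degree_0_id[of p] by simp
next
  case (Suc n)
  have "degree (pderiv p) \<le> n" using Suc.prems by (simp add: degree_pderiv)
  then have "(pderiv ^^ n) (pderiv p) = [:fact n * coeff (pderiv p) n:]" by (rule Suc.IH)
  moreover have "(pderiv ^^ Suc n) p = (pderiv ^^ n) (pderiv p)" by (simp only: funpow_Suc_right o_apply)
  ultimately show ?case by (simp add: coeff_pderiv algebra_simps)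
qed

lemma interp_sign:
  fixes D :: "nat \<Rightarrow> real \<Rightarrow> real" and C :: "real set"
  assumes der: "\<forall>m<n. \<forall>x\<in>{lo..hi}. (D m has_real_derivative D (Suc m) x) (at x within {lo..hi})"
    and pos: "\<forall>x\<in>{lo..hi}. D n x \<ge> 0" and fin: "finite C" and sub: "C \<subseteq> {lo..hi}"
    and cardC: "card C = n"
  shows "\<exists>q::real poly. degree q \<le> n \<and> coeff q n = 0 \<and>
           (\<forall>x\<in>{lo..hi}. (D 0 x - poly q x) * (\<Prod>c\<in>C. x - c) \<ge> 0)"
proof -
  define L where "L c = (\<Prod>d\<in>C-{c}. [:-d, 1:])" for c
  define q where "q = (\<Sum>c\<in>C. smult (D 0 c / (\<Prod>d\<in>C-{c}. c - d)) (L c))"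
  define W where "W = (\<Prod>c\<in>C. [:-c, 1:] :: real poly)"
  have degL: "degree (L c) \<le> n - 1" if "c \<in> C" for c
  proof -
    have "degree (L c) \<le> (\<Sum>d\<in>C-{c}. degree [:-d, 1:])"
      unfolding L_def using fin by (intro degree_prod_sum_le[unfolded comp_def]) simp
    also have "\<dots> = card (C - {c})" by simp
    also have "\<dots> = n - 1" using that fin cardC by simp
    finally show ?thesis .
  qed
  have degq: "degree q \<le> n - 1"
    unfolding q_def
  proof (rule degree_sum_le)
    show "finite C" by (rule fin)
    fix c assume "c \<in> C"
    then show "degree (smult (D 0 c / (\<Prod>d\<in>C-{c}. c - d)) (L c)) \<le> n - 1"
      using degL degree_smult_le order_trans by blast
  qed
  have coeffq: "coeff q n = 0"
  proof (cases "n = 0")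
    case True
    then have "C = {}" using cardC fin by simp
    then show ?thesis by (simp add: q_def)
  next
    case False
    then show ?thesis using degq by (intro coeff_eq_0) simp
  qed
  have degq': "degree q \<le> n" using degq by simp
  have polyL: "poly (L c) x = (\<Prod>d\<in>C-{c}. x - d)" for c x
    unfolding L_def poly_prod by simp
  have polyq: "poly q c = D 0 c" if c: "c \<in> C" for c
  proof -
    have z: "poly (smult (D 0 c' / (\<Prod>d\<in>C-{c'}. c' - d)) (L c')) c = 0" if "c' \<in> C - {c}" for c'
    proof -
      have "(\<Prod>d\<in>C-{c'}. c - d) = 0"
        using that c fin by (intro prod_zero) auto
      then show ?thesis by (simp add: polyL)
    qed
    have nz: "(\<Prod>d\<in>C-{c}. c - d) \<noteq> 0" using fin by (simp add: prod_zero_iff)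
    have "poly q c = (\<Sum>c'\<in>C. poly (smult (D 0 c' / (\<Prod>d\<in>C-{c'}. c' - d)) (L c')) c)"
      unfolding q_def poly_sum ..
    also have "\<dots> = poly (smult (D 0 c / (\<Prod>d\<in>C-{c}. c - d)) (L c)) c"
    proof -
      have "(\<Sum>c'\<in>C - {c}. poly (smult (D 0 c' / (\<Prod>d\<in>C-{c'}. c' - d)) (L c')) c) = 0"
        using z by (intro sum.neutral) blast
      then show ?thesis using sum.remove[OF fin c, of "\<lambda>c'. poly (smult (D 0 c' / (\<Prod>d\<in>C-{c'}. c' - d)) (L c')) c"]
        by simp
    qed
    also have "\<dots> = D 0 c" using nz by (simp add: polyL)
    finally show ?thesis .
  qed
  have polyW: "poly W x = (\<Prod>c\<in>C. x - c)" for x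
    unfolding W_def poly_prod by simp
  have degW: "degree W = n"
  proof -
    have "degree W = (\<Sum>c\<in>C. degree [:-c, 1:: real:])"
      unfolding W_def by (rule degree_prod_sum_eq) simp
    then show ?thesis using cardC by simp
  qed
  have coeffW: "coeff W n = 1"
  proof -
    have "lead_coeff W = (\<Prod>c\<in>C. lead_coeff [:-c, 1:: real:])"
      unfolding W_def by (rule lead_coeff_prod)
    then show ?thesis using degW by simp
  qed
  have dW: "(pderiv ^^ n) W = [:fact n:]" using pderiv_funpow_const[of W n] degW coeffW by simp
  have dq: "(pderiv ^^ n) q = 0" using pderiv_funpow_const[OF degq'] coeffq by simp
  show ?thesis
  proof (intro exI conjI ballI)
    show "degree q \<le> n" by (rule degq')
    show "coeff q n = 0" by (rule coeffq)
    fix x assume x: "x \<in> {lo..hi}"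
    show "(D 0 x - poly q x) * (\<Prod>c\<in>C. x - c) \<ge> 0"
    proof (cases "x \<in> C")
      case True
      then have "(\<Prod>c\<in>C. x - c) = 0" using fin by (intro prod_zero) auto
      then show ?thesis by simp
    next
      case False
      have wnz: "poly W x \<noteq> 0" using False fin by (simp add: polyW prod_zero_iff)
      define lam where "lam = (D 0 x - poly q x) / poly W x"
      define Phi where "Phi j t = D j t - poly ((pderiv ^^ j) q) t - lam * poly ((pderiv ^^ j) W) t" for j t
      have "\<exists>\<xi>\<in>{lo..hi}. Phi n \<xi> = 0"
      proof (rule gen_rolle)
        show "\<forall>m<n. \<forall>t\<in>{lo..hi}. (Phi m has_real_derivative Phi (Suc m) t) (at t within {lo..hi})"
        proof (intro allI impI ballI)
          fix m t assume m: "m < n" and t: "t \<in> {lo..hi}"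
          have d1: "(D m has_real_derivative D (Suc m) t) (at t within {lo..hi})" using der m t by blast
          have d2: "(poly ((pderiv ^^ m) q) has_real_derivative poly ((pderiv ^^ Suc m) q) t) (at t within {lo..hi})"
            using poly_DERIV[of "(pderiv ^^ m) q" t] by (simp add: has_field_derivative_at_within)
          have d3: "(poly ((pderiv ^^ m) W) has_real_derivative poly ((pderiv ^^ Suc m) W) t) (at t within {lo..hi})"
            using poly_DERIV[of "(pderiv ^^ m) W" t] by (simp add: has_field_derivative_at_within)
          have "((\<lambda>t. D m t - poly ((pderiv ^^ m) q) t - lam * poly ((pderiv ^^ m) W) t) has_real_derivative
                 D (Suc m) t - poly ((pderiv ^^ Suc m) q) t - lam * poly ((pderiv ^^ Suc m) W) t) (at t within {lo..hi})"
            by (intro DERIV_diff DERIV_cmult d1 d2 d3)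
          then show "(Phi m has_real_derivative Phi (Suc m) t) (at t within {lo..hi})"
            by (simp add: Phi_def[abs_def])
        qed
        show "finite (insert x C)" using fin by simp
        show "insert x C \<subseteq> {lo..hi}" using x sub by simp
        show "card (insert x C) = Suc n" using fin False cardC by simp
        show "\<forall>z\<in>insert x C. Phi 0 z = 0"
        proof
          fix z assume z: "z \<in> insert x C"
          show "Phi 0 z = 0"
          proof (cases "z = x")
            case True
            then show ?thesis using wnz by (simp add: Phi_def lam_def)
          next
            case False
            then have zC: "z \<in> C" using z by simp
            have "poly W z = 0" unfolding polyW using zC fin by (intro prod_zero) auto
            then show ?thesis using polyq[OF zC] by (simp add: Phi_def)
          qed
        qed
      qed
      then obtain \<xi> where xi: "\<xi> \<in> {lo..hi}" "Phi n \<xi> = 0" by blast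
      then have "D n \<xi> = lam * fact n" by (simp add: Phi_def dW dq)
      then have "lam \<ge> 0" using pos xi(1)
        by (metis fact_gt_zero linorder_not_le mult_neg_pos)
      moreover have "D 0 x - poly q x = lam * poly W x" using wnz by (simp add: lam_def)
      ultimately show ?thesis
        by (simp add: polyW[symmetric] mult.assoc)
    qed
  qed
qed



definition dd :: "real \<Rightarrow> real \<Rightarrow> real \<Rightarrow> real" where
  "dd x y t = (if t \<le> x then 1 else 0) - (if t \<le> y then 1 else 0)"

definition omega :: "real set \<Rightarrow> real \<Rightarrow> real" where
  "omega C t = (\<Prod>c\<in>C. t - c)"

lemma dd_low: "t \<le> min x y \<Longrightarrow> dd x y t = 0" by (simp add: dd_def)
lemma dd_high: "max x y < t \<Longrightarrow> dd x y t = 0" by (simp add: dd_def)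
lemma dd_eq: "x = y \<Longrightarrow> dd x y t = 0" by (simp add: dd_def)
lemma dd_nz: "dd x y t \<noteq> 0 \<Longrightarrow> t \<le> max x y" by (auto simp: dd_def split: if_splits)
lemma dd_pos: "y < x \<Longrightarrow> dd x y t \<ge> 0" by (simp add: dd_def)
lemma dd_neg: "x < y \<Longrightarrow> dd x y t \<le> 0" by (simp add: dd_def)

lemma omega_empty[simp]: "omega {} t = 1" by (simp add: omega_def)

lemma omega_insert: "finite C \<Longrightarrow> c \<notin> C \<Longrightarrow> omega (insert c C) t = (t - c) * omega C t"
  by (simp add: omega_def)

lemma omega_below_strict:
  assumes "finite C" "\<forall>c\<in>C. t < c"
  shows "(even (card C) \<longrightarrow> omega C t > 0) \<and> (odd (card C) \<longrightarrow> omega C t < 0)"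
  using assms
proof (induction C rule: finite_induct)
  case empty
  then show ?case by simp
next
  case (insert c F)
  have "t - c < 0" using insert.prems by simp
  moreover have "(even (card F) \<longrightarrow> omega F t > 0) \<and> (odd (card F) \<longrightarrow> omega F t < 0)"
    using insert.IH insert.prems by simp
  ultimately show ?case using insert.hyps
    by (auto simp: omega_insert mult_neg_neg mult_neg_pos)
qed

lemma omega_below:
  assumes "finite C" "\<forall>c\<in>C. t \<le> c"
  shows "omega C t = 0 \<or> (even (card C) \<and> omega C t > 0) \<or> (odd (card C) \<and> omega C t < 0)"
proof (cases "t \<in> C")
  case True
  then show ?thesis using assms(1) by (simp add: omega_def prod_zero)
next
  case False
  then have "\<forall>c\<in>C. t < c" using assms(2) by (metis order_le_less)
  then show ?thesis using omega_below_strict[OF assms(1)] by blast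
qed

lemma dd_omega_same:
  assumes "finite C" "\<forall>c\<in>C. max x y \<le> c" "x \<noteq> y" "y < x \<longleftrightarrow> even (card C)"
  shows "dd x y t * omega C t \<ge> 0"
proof (cases "dd x y t = 0")
  case True then show ?thesis by simp
next
  case False
  then have "t \<le> max x y" by (rule dd_nz)
  then have "\<forall>c\<in>C. t \<le> c" using assms(2) by force
  from omega_below[OF assms(1) this] show ?thesis
  proof (elim disjE conjE)
    assume "omega C t = 0" then show ?thesis by simp
  next
    assume "even (card C)" "omega C t > 0"
    then have "y < x" using assms(4) by simp
    then show ?thesis using dd_pos[of y x t] \<open>omega C t > 0\<close> by simp
  next
    assume "odd (card C)" "omega C t < 0"
    then have "x < y" using assms(3,4) by auto
    then show ?thesis using dd_neg[of x y t] \<open>omega C t < 0\<close> by (simp add: mult_nonpos_nonpos)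
  qed
qed

lemma sum_dd_zero_low:
  fixes a b :: "nat \<Rightarrow> real"
  assumes sa: "\<And>i j. 1 \<le> i \<Longrightarrow> i \<le> j \<Longrightarrow> j \<le> n \<Longrightarrow> a j \<le> a i"
    and sb: "\<And>i j. 1 \<le> i \<Longrightarrow> i \<le> j \<Longrightarrow> j \<le> n \<Longrightarrow> b j \<le> b i"
    and "1 \<le> p" "p \<le> i" "i \<le> n" "\<forall>l\<in>{p<..i}. a l = b l" "t \<le> min (a p) (b p)"
  shows "(\<Sum>l=1..i. dd (a l) (b l) t) = 0"
proof (rule sum.neutral, rule ballI)
  fix l assume l: "l \<in> {1..i}"
  show "dd (a l) (b l) t = 0"
  proof (cases "l \<le> p")
    case True
    then have "a p \<le> a l" "b p \<le> b l" using sa sb l assms(4,5) by auto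
    then show ?thesis using assms(7) by (intro dd_low) simp
  next
    case False
    then show ?thesis using assms(6) l by (intro dd_eq) auto
  qed
qed

definition INV :: "(nat \<Rightarrow> real) \<Rightarrow> (nat \<Rightarrow> real) \<Rightarrow> nat \<Rightarrow> nat \<Rightarrow> real set \<Rightarrow> nat \<Rightarrow> bool" where
  "INV a b n i C p \<longleftrightarrow> finite C \<and> C \<subseteq> (\<lambda>l. max (a l) (b l)) ` {1..n} \<and> p \<le> i \<and>
   (\<forall>t. (\<Sum>l=1..i. dd (a l) (b l) t) * omega C t \<ge> 0) \<and>
   (p = 0 \<longrightarrow> C = {} \<and> (\<forall>l\<in>{1..i}. a l = b l)) \<and>
   (0 < p \<longrightarrow> a p \<noteq> b p \<and> (\<forall>l\<in>{p<..i}. a l = b l) \<and> (\<forall>c\<in>C. max (a p) (b p) \<le> c)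
       \<and> (b p < a p \<longleftrightarrow> even (card C))) \<and>
   card C + (if 0 < i \<and> b 1 < a 1 then 1 else 0) \<le> card {l\<in>{1..i}. a l \<noteq> b l}"

lemma comb_inv:
  fixes a b :: "nat \<Rightarrow> real" and n :: nat
  assumes sa: "\<And>i j. 1 \<le> i \<Longrightarrow> i \<le> j \<Longrightarrow> j \<le> n \<Longrightarrow> a j \<le> a i"
    and sb: "\<And>i j. 1 \<le> i \<Longrightarrow> i \<le> j \<Longrightarrow> j \<le> n \<Longrightarrow> b j \<le> b i"
    and top: "b 1 \<le> a 1"
  shows "i \<le> n \<Longrightarrow> \<exists>C p. INV a b n i C p"
proof (induction i)
  case 0
  show ?case by (intro exI[of _ "{}"] exI[of _ 0]) (simp add: INV_def)
next
  case (Suc i)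
  then have "i \<le> n" by simp
  then obtain C p where fin: "finite C" and Csub: "C \<subseteq> (\<lambda>l. max (a l) (b l)) ` {1..n}"
    and pi: "p \<le> i"
    and J1: "\<forall>t. (\<Sum>l=1..i. dd (a l) (b l) t) * omega C t \<ge> 0"
    and J0: "p = 0 \<longrightarrow> C = {} \<and> (\<forall>l\<in>{1..i}. a l = b l)"
    and Jp: "0 < p \<longrightarrow> a p \<noteq> b p \<and> (\<forall>l\<in>{p<..i}. a l = b l) \<and> (\<forall>c\<in>C. max (a p) (b p) \<le> c)
       \<and> (b p < a p \<longleftrightarrow> even (card C))"
    and cnt: "card C + (if 0 < i \<and> b 1 < a 1 then 1 else 0) \<le> card {l\<in>{1..i}. a l \<noteq> b l}"
    using Suc.IH unfolding INV_def by blast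
  define j where "j = Suc i"
  define x where "x = a j"
  define y where "y = b j"
  have jn: "j \<le> n" "1 \<le> j" using Suc.prems by (auto simp: j_def)
  have sumS: "(\<Sum>l=1..j. dd (a l) (b l) t) = (\<Sum>l=1..i. dd (a l) (b l) t) + dd x y t" for t
    by (simp add: j_def x_def y_def)
  note sumS2 = sumS[unfolded One_nat_def]
  have setS: "{l\<in>{1..j}. a l \<noteq> b l} = (if x \<noteq> y then insert j {l\<in>{1..i}. a l \<noteq> b l} else {l\<in>{1..i}. a l \<noteq> b l})"
    by (auto simp: j_def x_def y_def le_Suc_eq)
  have cardS: "card {l\<in>{1..j}. a l \<noteq> b l} = card {l\<in>{1..i}. a l \<noteq> b l} + (if x \<noteq> y then 1 else 0)"
    unfolding setS by (simp add: j_def)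
  have ind: "(if 0 < j \<and> b 1 < a 1 then 1 else 0) \<le> (if 0 < i \<and> b 1 < a 1 then 1 else (0::nat)) + (if x \<noteq> y then 1 else 0)"
  proof (cases "i = 0")
    case True
    then show ?thesis using j_def x_def y_def by auto
  next
    case False
    then show ?thesis by (simp add: j_def)
  qed
  have jmem: "max x y \<in> (\<lambda>l. max (a l) (b l)) ` {1..n}" using jn by (auto simp: x_def y_def)
  show ?case unfolding j_def[symmetric]
  proof (cases "x = y")
    case True
    have "INV a b n j C p"
      unfolding INV_def
    proof (intro conjI)
      show "finite C" "C \<subseteq> (\<lambda>l. max (a l) (b l)) ` {1..n}" by (fact fin, fact Csub)
      show "p \<le> j" using pi by (simp add: j_def)
      show "\<forall>t. 0 \<le> (\<Sum>l=1..j. dd (a l) (b l) t) * omega C t"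
      proof
        fix t
        have "(\<Sum>l=1..j. dd (a l) (b l) t) = (\<Sum>l=1..i. dd (a l) (b l) t)"
          using sumS[of t] True dd_eq[of x y t] by simp
        then show "0 \<le> (\<Sum>l=1..j. dd (a l) (b l) t) * omega C t" using J1 by simp
      qed
      show "p = 0 \<longrightarrow> C = {} \<and> (\<forall>l\<in>{1..j}. a l = b l)"
        using J0 True by (auto simp: j_def x_def y_def le_Suc_eq)
      show "0 < p \<longrightarrow> a p \<noteq> b p \<and> (\<forall>l\<in>{p<..j}. a l = b l) \<and> (\<forall>c\<in>C. max (a p) (b p) \<le> c)
          \<and> (b p < a p \<longleftrightarrow> even (card C))"
        using Jp True by (auto simp: j_def x_def y_def le_Suc_eq)
      show "card C + (if 0 < j \<and> b 1 < a 1 then 1 else 0) \<le> card {l\<in>{1..j}. a l \<noteq> b l}"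
        using cnt ind True cardS by simp
    qed
    then show "\<exists>C p. INV a b n j C p" by blast
  next
    case False
    note xy = False
    show "\<exists>C p. INV a b n j C p"
    proof (cases "p = 0")
      case True
      then have C0: "C = {}" and alleq: "\<forall>l\<in>{1..i}. a l = b l" using J0 by auto
      have S0: "(\<Sum>l=1..i. dd (a l) (b l) t) = 0" for t
        using alleq by (intro sum.neutral) (simp add: dd_eq)
      show ?thesis
      proof (cases "y < x")
        case True
        have "INV a b n j {} j"
          unfolding INV_def
        proof (intro conjI)
          show "\<forall>t. 0 \<le> (\<Sum>l=1..j. dd (a l) (b l) t) * omega {} t"
            using True by (simp add: sumS sumS2 S0 S0[unfolded One_nat_def] dd_pos)
          show "0 < j \<longrightarrow> a j \<noteq> b j \<and> (\<forall>l\<in>{j<..j}. a l = b l) \<and> (\<forall>c\<in>{}. max (a j) (b j) \<le> c)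
            \<and> (b j < a j \<longleftrightarrow> even (card {}))"
            using True by (simp add: x_def y_def)
          show "card {} + (if 0 < j \<and> b 1 < a 1 then 1 else 0) \<le> card {l\<in>{1..j}. a l \<noteq> b l}"
            using cardS xy by simp
        qed (simp_all add: j_def)
        then show ?thesis by blast
      next
        case False
        then have xly: "x < y" using xy by simp
        have i1: "1 \<le> i"
        proof (rule ccontr)
          assume "\<not> 1 \<le> i"
          then have "j = 1" by (simp add: j_def)
          then show False using top xly by (simp add: x_def y_def)
        qed
        then have a1: "a 1 = b 1" using alleq by simp
        have "INV a b n j {max x y} j"
          unfolding INV_def
        proof (intro conjI)
          show "{max x y} \<subseteq> (\<lambda>l. max (a l) (b l)) ` {1..n}" using jmem by simp
          show "\<forall>t. 0 \<le> (\<Sum>l=1..j. dd (a l) (b l) t) * omega {max x y} t"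
          proof
            fix t
            have "dd x y t * (t - max x y) \<ge> 0"
            proof (cases "dd x y t = 0")
              case False
              then have "t - max x y \<le> 0" using dd_nz by simp
              then show ?thesis using dd_neg[OF xly, of t] by (simp add: mult_nonpos_nonpos)
            qed simp
            then show "0 \<le> (\<Sum>l=1..j. dd (a l) (b l) t) * omega {max x y} t"
              by (simp add: sumS sumS2 S0 S0[unfolded One_nat_def] omega_def)
          qed
          show "0 < j \<longrightarrow> a j \<noteq> b j \<and> (\<forall>l\<in>{j<..j}. a l = b l) \<and> (\<forall>c\<in>{max x y}. max (a j) (b j) \<le> c)
            \<and> (b j < a j \<longleftrightarrow> even (card {max x y}))"
            using xly by (simp add: x_def y_def)
          show "card {max x y} + (if 0 < j \<and> b 1 < a 1 then 1 else 0) \<le> card {l\<in>{1..j}. a l \<noteq> b l}"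
            using cardS xy a1 by simp
        qed (simp_all add: j_def)
        then show ?thesis by blast
      qed
    next
      case False
      then have p0: "0 < p" by simp
      have apb: "a p \<noteq> b p" and rest: "\<forall>l\<in>{p<..i}. a l = b l"
        and nodes: "\<forall>c\<in>C. max (a p) (b p) \<le> c" and par: "b p < a p \<longleftrightarrow> even (card C)"
        using Jp p0 by auto
      have pj: "1 \<le> p" "p \<le> j" using p0 pi by (auto simp: j_def)
      have sap: "x \<le> a p" "y \<le> b p" using sa[OF pj jn(1)] sb[OF pj jn(1)] by (auto simp: x_def y_def)
      have S0: "(\<Sum>l=1..i. dd (a l) (b l) t) = 0" if "t \<le> min (a p) (b p)" for t
        using sum_dd_zero_low[OF sa sb pj(1) pi \<open>i \<le> n\<close> rest that] by simp
      have rest': "\<forall>l\<in>{j<..j}. a l = b l" by simp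
      show ?thesis
      proof (cases "y < x \<longleftrightarrow> b p < a p")
        case True
        have mx: "\<forall>c\<in>C. max x y \<le> c" using nodes sap by force
        have "INV a b n j C j"
          unfolding INV_def
        proof (intro conjI)
          show "finite C" "C \<subseteq> (\<lambda>l. max (a l) (b l)) ` {1..n}" by (fact fin, fact Csub)
          show "\<forall>t. 0 \<le> (\<Sum>l=1..j. dd (a l) (b l) t) * omega C t"
          proof
            fix t
            have "dd x y t * omega C t \<ge> 0"
              using dd_omega_same[OF fin mx xy] True par by simp
            then show "0 \<le> (\<Sum>l=1..j. dd (a l) (b l) t) * omega C t"
              using J1 by (simp add: sumS sumS2 distrib_right)
          qed
          show "0 < j \<longrightarrow> a j \<noteq> b j \<and> (\<forall>l\<in>{j<..j}. a l = b l) \<and> (\<forall>c\<in>C. max (a j) (b j) \<le> c)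
            \<and> (b j < a j \<longleftrightarrow> even (card C))"
            using xy mx True par by (simp add: x_def y_def)
          show "card C + (if 0 < j \<and> b 1 < a 1 then 1 else 0) \<le> card {l\<in>{1..j}. a l \<noteq> b l}"
            using cnt ind cardS xy by simp
        qed (simp_all add: j_def)
        then show ?thesis by blast
      next
        case False
        define c where "c = max x y"
        have cmin: "c \<le> min (a p) (b p)"
        proof (cases "b p < a p")
          case True
          then have "x < y" using False xy by auto
          then show ?thesis using sap True by (simp add: c_def)
        next
          case False2: False
          then have "a p < b p" using apb by simp
          moreover have "y < x" using False False2 xy by auto
          ultimately show ?thesis using sap by (simp add: c_def)
        qed
        have mm: "min (a p) (b p) < max (a p) (b p)" using apb by (simp add: min_def max_def)
        have cless: "\<forall>c'\<in>C. c < c'" using nodes cmin mm by force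
        then have cnotin: "c \<notin> C" by blast
        have parC: "y < x \<longleftrightarrow> odd (card C)" using False par xy by auto
        have "INV a b n j (insert c C) j"
          unfolding INV_def
        proof (intro conjI)
          show "finite (insert c C)" using fin by simp
          show "insert c C \<subseteq> (\<lambda>l. max (a l) (b l)) ` {1..n}" using Csub jmem by (simp add: c_def)
          show "\<forall>t. 0 \<le> (\<Sum>l=1..j. dd (a l) (b l) t) * omega (insert c C) t"
          proof
            fix t
            show "0 \<le> (\<Sum>l=1..j. dd (a l) (b l) t) * omega (insert c C) t"
            proof (cases "t \<le> min (a p) (b p)")
              case True
              have key: "dd x y t * omega C t * (t - c) \<ge> 0"
              proof (cases "dd x y t = 0")
                case False
                then have tc: "t \<le> c" using dd_nz by (simp add: c_def)
                then have "\<forall>c'\<in>C. t < c'" using cless by force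
                then have sg: "(even (card C) \<longrightarrow> omega C t > 0) \<and> (odd (card C) \<longrightarrow> omega C t < 0)"
                  by (rule omega_below_strict[OF fin])
                have "dd x y t * omega C t \<le> 0"
                proof (cases "y < x")
                  case True
                  then have "odd (card C)" using parC by simp
                  then show ?thesis using sg dd_pos[OF True, of t] by (simp add: mult_nonneg_nonpos)
                next
                  case False
                  then have "x < y" using xy by simp
                  moreover have "even (card C)" using parC False by simp
                  ultimately show ?thesis using sg dd_neg[of x y t] by (simp add: mult_nonpos_nonneg)
                qed
                moreover have "t - c \<le> 0" using tc by simp
                ultimately show ?thesis by (simp add: mult_nonpos_nonpos)
              qed simp
              then show ?thesis
                using S0[OF True] S0[OF True, unfolded One_nat_def] by (simp add: sumS sumS2 omega_insert[OF fin cnotin] mult_ac)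
            next
              case False
              then have tc: "c < t" using cmin by linarith
              then have "dd x y t = 0" by (intro dd_high) (simp add: c_def)
              moreover have "(\<Sum>l=1..i. dd (a l) (b l) t) * omega C t * (t - c) \<ge> 0"
                using J1 tc by simp
              ultimately show ?thesis
                by (simp add: sumS sumS2 omega_insert[OF fin cnotin] mult_ac)
            qed
          qed
          show "0 < j \<longrightarrow> a j \<noteq> b j \<and> (\<forall>l\<in>{j<..j}. a l = b l) \<and> (\<forall>c'\<in>insert c C. max (a j) (b j) \<le> c')
            \<and> (b j < a j \<longleftrightarrow> even (card (insert c C)))"
            using xy cless parC fin cnotin by (auto simp: x_def y_def c_def less_imp_le)
          show "card (insert c C) + (if 0 < j \<and> b 1 < a 1 then 1 else 0) \<le> card {l\<in>{1..j}. a l \<noteq> b l}"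
            using cnt cardS xy fin cnotin p0 pi by (simp add: j_def)
        qed (simp_all add: j_def)
        then show ?thesis by blast
      qed
    qed
  qed
qed

lemma comb_final:
  fixes a b :: "nat \<Rightarrow> real" and k :: nat
  assumes k: "1 \<le> k"
    and sa: "\<And>i j. 1 \<le> i \<Longrightarrow> i \<le> j \<Longrightarrow> j \<le> k+1 \<Longrightarrow> a j \<le> a i"
    and sb: "\<And>i j. 1 \<le> i \<Longrightarrow> i \<le> j \<Longrightarrow> j \<le> k+1 \<Longrightarrow> b j \<le> b i"
    and top: "b 1 \<le> a 1"
    and bot: "(-1)^k * a (k+1) \<le> (-1)^k * b (k+1)"
  shows "\<exists>C. finite C \<and> C \<subseteq> (\<lambda>l. max (a l) (b l)) ` {1..k+1} \<and> card C \<le> k - 1 \<and>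
           (\<forall>t. (\<Sum>l=1..k+1. dd (a l) (b l) t) * omega C t \<ge> 0)"
proof -
  obtain C p where I: "INV a b (k+1) (k+1) C p"
    using comb_inv[of "k+1" a b, OF sa sb top, of "k+1"] by auto
  define Z where "Z = {l\<in>{1..k+1}. a l \<noteq> b l}"
  have fin: "finite C" and Csub: "C \<subseteq> (\<lambda>l. max (a l) (b l)) ` {1..k+1}"
    and pi: "p \<le> k+1"
    and J1: "\<forall>t. (\<Sum>l=1..k+1. dd (a l) (b l) t) * omega C t \<ge> 0"
    and J0: "p = 0 \<longrightarrow> C = {} \<and> (\<forall>l\<in>{1..k+1}. a l = b l)"
    and Jp: "0 < p \<longrightarrow> a p \<noteq> b p \<and> (\<forall>l\<in>{p<..k+1}. a l = b l) \<and> (b p < a p \<longleftrightarrow> even (card C))"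
    and cnt: "card C + (if b 1 < a 1 then 1 else 0) \<le> card Z"
    using I unfolding INV_def Z_def by auto
  have Zsub: "Z \<subseteq> {1..k+1}" by (auto simp: Z_def)
  have Z1: "card Z \<le> k" if "a 1 = b 1"
  proof -
    have "Z \<subseteq> {2..k+1}" using that Zsub by (auto simp: Z_def) (metis le_antisym not_less_eq_eq numeral_2_eq_2 One_nat_def)
    then show ?thesis using card_mono[of "{2..k+1}" Z] by simp
  qed
  have Zn: "card Z \<le> k" if "a (k+1) = b (k+1)"
  proof -
    have "Z \<subseteq> {1..k}" using that by (auto simp: Z_def) (metis le_Suc_eq Suc_eq_plus1)
    then show ?thesis using card_mono[of "{1..k}" Z] by simp
  qed
  have Z1n: "card Z \<le> k - 1" if "a 1 = b 1" "a (k+1) = b (k+1)"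
  proof -
    have "Z \<subseteq> {2..k}"
    proof
      fix x assume "x \<in> Z"
      then have x: "1 \<le> x" "x \<le> k+1" "a x \<noteq> b x" by (auto simp: Z_def)
      then have "x \<noteq> 1" "x \<noteq> k+1" using that by auto
      then show "x \<in> {2..k}" using x by auto
    qed
    then show ?thesis using card_mono[of "{2..k}" Z] by simp
  qed
  have Zall: "card Z \<le> k + 1" using card_mono[OF _ Zsub] by simp
  have "card C \<le> k - 1"
  proof (cases "a (k+1) = b (k+1)")
    case True
    then show ?thesis using cnt Zn Z1n top by (cases "a 1 = b 1") auto
  next
    case False
    have p0: "p \<noteq> 0" using J0 False k by auto
    have pk: "p = k + 1"
    proof (rule ccontr)
      assume "p \<noteq> k + 1"
      then have "k+1 \<in> {p<..k+1}" using pi by simp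
      then show False using Jp p0 False by auto
    qed
    have par: "b (k+1) < a (k+1) \<longleftrightarrow> even (card C)" using Jp p0 pk by auto
    have ne: "card C \<noteq> k"
    proof (cases "even k")
      case True
      then have "a (k+1) < b (k+1)" using bot False by simp
      then show ?thesis using par True by auto
    next
      case False2: False
      then have "b (k+1) < a (k+1)" using bot False by simp
      then show ?thesis using par False2 by auto
    qed
    have "card C \<le> k" using cnt Z1 Zall top by (cases "a 1 = b 1") auto
    then show ?thesis using ne by simp
  qed
  then show ?thesis using fin Csub J1 by blast
qed



lemma chain_mono:
  fixes a :: "nat \<Rightarrow> real"
  assumes "\<forall>i\<in>{1..k}. a (i + 1) \<le> a i"
  shows "1 \<le> i \<Longrightarrow> i \<le> j \<Longrightarrow> j \<le> k+1 \<Longrightarrow> a j \<le> a i"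
proof (induction j)
  case 0 then show ?case by simp
next
  case (Suc j)
  show ?case
  proof (cases "i = Suc j")
    case True then show ?thesis by simp
  next
    case False
    then have "i \<le> j" using Suc.prems by simp
    then have "a j \<le> a i" using Suc by simp
    moreover have "a (j + 1) \<le> a j" using assms Suc.prems \<open>i \<le> j\<close> by auto
    ultimately show ?thesis by simp
  qed
qed

lemma rep:
  fixes u U :: "real \<Rightarrow> real" and a b :: "nat \<Rightarrow> real"
  assumes der: "\<forall>x\<in>{lo..hi}. (U has_real_derivative u x) (at x within {lo..hi})"
    and ina: "\<forall>l\<in>{1..n}. a l \<in> {lo..hi}" and inb: "\<forall>l\<in>{1..n}. b l \<in> {lo..hi}"
  shows "((\<lambda>t. u t * (\<Sum>l=1..n. dd (a l) (b l) t)) has_integral (\<Sum>l=1..n. U (a l) - U (b l))) {lo..hi}"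
proof -
  have one: "((\<lambda>t. u t * (if t \<le> x then 1 else 0)) has_integral U x - U lo) {lo..hi}"
    if x: "x \<in> {lo..hi}" for x
  proof -
    have ftc: "(u has_integral U x - U lo) {lo..x}"
    proof (rule fundamental_theorem_of_calculus)
      show "lo \<le> x" using x by simp
      fix y assume y: "y \<in> {lo..x}"
      then have "y \<in> {lo..hi}" using x by simp
      then have "(U has_real_derivative u y) (at y within {lo..hi})" using der by blast
      then have "(U has_real_derivative u y) (at y within {lo..x})"
        by (rule has_field_derivative_subset) (use x in auto)
      then show "(U has_vector_derivative u y) (at y within {lo..x})"
        by (simp add: has_real_derivative_iff_has_vector_derivative)
    qed
    have eq: "{..x} \<inter> {lo..hi} = {lo..x}" using x by auto
    have "((\<lambda>t. if t \<in> {..x} then u t else 0) has_integral U x - U lo) {lo..hi}"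
      unfolding has_integral_restrict_Int eq by (rule ftc)
    then show ?thesis by (rule has_integral_eq[rotated]) simp
  qed
  have "((\<lambda>t. \<Sum>l=1..n. u t * (if t \<le> a l then 1 else 0) - u t * (if t \<le> b l then 1 else 0))
      has_integral (\<Sum>l=1..n. (U (a l) - U lo) - (U (b l) - U lo))) {lo..hi}"
  proof (rule has_integral_sum)
    show "finite {1..n}" by simp
    fix l assume l: "l \<in> {1..n}"
    show "((\<lambda>t. u t * (if t \<le> a l then 1 else 0) - u t * (if t \<le> b l then 1 else 0))
      has_integral (U (a l) - U lo) - (U (b l) - U lo)) {lo..hi}"
      by (intro has_integral_diff one) (use ina inb l in auto)
  qed
  then show ?thesis
    by (simp add: dd_def sum_distrib_left right_diff_distrib)
qed

definition pint :: "real poly \<Rightarrow> nat \<Rightarrow> real \<Rightarrow> real" where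
  "pint p m x = (\<Sum>j\<le>m. coeff p j * x ^ Suc j / real (Suc j))"

lemma pint_deriv:
  assumes "degree p \<le> m"
  shows "(pint p m has_real_derivative poly p x) (at x within S)"
proof -
  have "poly p x = (\<Sum>j\<le>degree p. coeff p j * x ^ j)" by (rule poly_altdef)
  also have "\<dots> = (\<Sum>j\<le>m. coeff p j * x ^ j)"
    using assms by (intro sum.mono_neutral_left) (auto simp: coeff_eq_0)
  finally have "poly p x = (\<Sum>j\<le>m. coeff p j * x ^ j)" .
  moreover have "(pint p m has_real_derivative (\<Sum>j\<le>m. coeff p j * x ^ j)) (at x within S)"
    unfolding pint_def[abs_def]
    apply (rule derivative_eq_intros refl | simp)+
    apply (simp add: mult.commute)
    done
  ultimately show ?thesis by simp
qed

lemma pint_ortho: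
  fixes p :: "real poly" and a b :: "nat \<Rightarrow> real"
  assumes ps: "\<forall>j\<in>{1..<k}. (\<Sum>i=1..k+1. a i ^ j) = (\<Sum>i=1..k+1. b i ^ j)"
    and cz: "\<forall>j. coeff p j \<noteq> 0 \<longrightarrow> Suc j < k"
  shows "(\<Sum>l=1..k+1. pint p m (a l) - pint p m (b l)) = 0"
proof -
  have "(\<Sum>l=1..k+1. pint p m (a l) - pint p m (b l))
      = (\<Sum>l=1..k+1. \<Sum>j\<le>m. coeff p j / real (Suc j) * (a l ^ Suc j - b l ^ Suc j))"
    unfolding pint_def by (intro sum.cong refl) (simp add: sum_subtractf[symmetric] algebra_simps)
  also have "\<dots> = (\<Sum>j\<le>m. \<Sum>l=1..k+1. coeff p j / real (Suc j) * (a l ^ Suc j - b l ^ Suc j))"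
    by (rule sum.swap)
  also have "\<dots> = (\<Sum>j\<le>m. coeff p j / real (Suc j) * ((\<Sum>l=1..k+1. a l ^ Suc j) - (\<Sum>l=1..k+1. b l ^ Suc j)))"
    by (intro sum.cong refl) (simp only: sum_distrib_left[symmetric] sum_subtractf)
  also have "\<dots> = 0"
  proof (rule sum.neutral, rule ballI)
    fix j assume "j \<in> {..m}"
    show "coeff p j / real (Suc j) * ((\<Sum>l=1..k+1. a l ^ Suc j) - (\<Sum>l=1..k+1. b l ^ Suc j)) = 0"
    proof (cases "coeff p j = 0")
      case False
      then have "Suc j \<in> {1..<k}" using cz by simp
      then have "(\<Sum>l=1..k+1. a l ^ Suc j) = (\<Sum>l=1..k+1. b l ^ Suc j)" using ps by blast
      then show ?thesis by simp
    qed simp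
  qed
  finally show ?thesis .
qed

lemma prod_sign_aux:
  fixes x y w :: real
  assumes "x * w \<ge> 0" "y * w \<ge> 0" "w \<noteq> 0"
  shows "x * y \<ge> 0"
proof -
  have "(x * w) * (y * w) \<ge> 0" using assms by simp
  then have "(x * y) * (w * w) \<ge> 0" by (simp add: mult_ac)
  moreover have "w * w > 0" using assms(3) by (cases "w > 0") (auto simp: mult_neg_neg)
  ultimately show ?thesis by (simp add: zero_le_mult_iff)
qed

theorem mainTheorem7:
  fixes k :: nat and lo hi :: real and a b :: "nat \<Rightarrow> real"
    and f :: "real \<Rightarrow> real" and D :: "nat \<Rightarrow> real \<Rightarrow> real"
  assumes "k \<ge> 1"
    and "\<forall>i\<in>{1..k}. a (i + 1) \<le> a i"
    and "\<forall>i\<in>{1..k}. b (i + 1) \<le> b i"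
    and "\<forall>i\<in>{1..k+1}. a i \<in> {lo..hi}"
    and "\<forall>i\<in>{1..k+1}. b i \<in> {lo..hi}"
    and "a 1 \<ge> b 1"
    and "(-1) ^ k * a (k + 1) \<le> (-1) ^ k * b (k + 1)"
    and "\<forall>j\<in>{1..<k}. (\<Sum>i=1..k+1. a i ^ j) = (\<Sum>i=1..k+1. b i ^ j)"
    and "D 0 = f"
    and "k_times_differentiable_on k D {lo..hi}"
    and "\<forall>x\<in>{lo..hi}. D k x \<ge> 0"
  shows "(\<Sum>i=1..k+1. f (a i)) \<ge> (\<Sum>i=1..k+1. f (b i))"
proof -
  note k = assms(1) and ina = assms(4) and inb = assms(5) and ps = assms(8)
  have kd: "\<forall>m<k. \<forall>x\<in>{lo..hi}. (D m has_real_derivative D (Suc m) x) (at x within {lo..hi})"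
    using assms(10) unfolding k_times_differentiable_on_def .
  have sa: "\<And>i j. 1 \<le> i \<Longrightarrow> i \<le> j \<Longrightarrow> j \<le> k+1 \<Longrightarrow> a j \<le> a i"
    using chain_mono[OF assms(2)] by blast
  have sb: "\<And>i j. 1 \<le> i \<Longrightarrow> i \<le> j \<Longrightarrow> j \<le> k+1 \<Longrightarrow> b j \<le> b i"
    using chain_mono[OF assms(3)] by blast
  obtain C where fin: "finite C" and Csub: "C \<subseteq> (\<lambda>l. max (a l) (b l)) ` {1..k+1}"
    and cardC: "card C \<le> k - 1"
    and NW: "\<forall>t. (\<Sum>l=1..k+1. dd (a l) (b l) t) * omega C t \<ge> 0"
    using comb_final[OF k sa sb assms(6) assms(7)] by blast
  define N where "N t = (\<Sum>l=1..k+1. dd (a l) (b l) t)" for t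
  have NW': "N t * omega C t \<ge> 0" for t using NW by (simp add: N_def)
  have Cin: "C \<subseteq> {lo..hi}"
  proof
    fix c assume "c \<in> C"
    then obtain l where l: "l \<in> {1..k+1}" "c = max (a l) (b l)" using Csub by blast
    then show "c \<in> {lo..hi}" using ina inb by (auto simp: max_def)
  qed
  define S where "S = (\<Sum>l=1..k+1. D 0 (a l) - D 0 (b l))"
  have S_eq: "S = (\<Sum>i=1..k+1. f (a i)) - (\<Sum>i=1..k+1. f (b i))"
    unfolding S_def assms(9) by (simp add: sum_subtractf)
  have d0: "\<forall>x\<in>{lo..hi}. (D 0 has_real_derivative D 1 x) (at x within {lo..hi})"
    using kd k by (simp add: One_nat_def)
  have gN: "((\<lambda>t. D 1 t * N t) has_integral S) {lo..hi}"
    unfolding N_def S_def by (rule rep[OF d0 ina inb])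
  have "S \<ge> 0"
  proof (cases "card C = k - 1")
    case True
    have der': "\<forall>m<k-1. \<forall>x\<in>{lo..hi}. ((\<lambda>j. D (Suc j)) m has_real_derivative (\<lambda>j. D (Suc j)) (Suc m) x) (at x within {lo..hi})"
      using kd by auto
    have pos': "\<forall>x\<in>{lo..hi}. (\<lambda>j. D (Suc j)) (k-1) x \<ge> 0" using assms(11) k by simp
    obtain q where degq: "degree q \<le> k - 1" and cq: "coeff q (k-1) = 0"
      and sg: "\<forall>x\<in>{lo..hi}. ((\<lambda>j. D (Suc j)) 0 x - poly q x) * (\<Prod>c\<in>C. x - c) \<ge> 0"
      using interp_sign[OF der' pos' fin Cin True] by blast
    have sg': "(D 1 x - poly q x) * omega C x \<ge> 0" if "x \<in> {lo..hi}" for x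
      using sg that by (simp add: omega_def One_nat_def)
    have cz: "\<forall>j. coeff q j \<noteq> 0 \<longrightarrow> Suc j < k"
    proof (intro allI impI)
      fix j assume "coeff q j \<noteq> 0"
      then have "j \<le> k - 1" "j \<noteq> k - 1" using degq cq le_degree order_trans by blast+
      then show "Suc j < k" by simp
    qed
    have qN: "((\<lambda>t. poly q t * N t) has_integral 0) {lo..hi}"
    proof -
      have "((\<lambda>t. poly q t * N t) has_integral (\<Sum>l=1..k+1. pint q (k-1) (a l) - pint q (k-1) (b l))) {lo..hi}"
        unfolding N_def by (rule rep[OF _ ina inb]) (use pint_deriv[OF degq] in blast)
      then show ?thesis using pint_ortho[OF ps cz] by simp
    qed
    have hN: "((\<lambda>t. D 1 t * N t - poly q t * N t) has_integral S) {lo..hi}"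
      using has_integral_diff[OF gN qN] by simp
    have hN2: "((\<lambda>t. if t \<in> C then 0 else (D 1 t - poly q t) * N t) has_integral S) {lo..hi}"
      by (rule has_integral_spike_finite[OF fin _ hN]) (simp add: algebra_simps)
    show ?thesis
    proof (rule has_integral_nonneg[OF hN2])
      fix t assume t: "t \<in> {lo..hi}"
      show "0 \<le> (if t \<in> C then 0 else (D 1 t - poly q t) * N t)"
      proof (cases "t \<in> C")
        case False
        have "omega C t \<noteq> 0" using False fin by (simp add: omega_def prod_zero_iff)
        then show ?thesis using prod_sign_aux[OF sg'[OF t] NW'[of t]] False by simp
      qed simp
    qed
  next
    case False
    then have small: "card C < k - 1" using cardC by simp
    define W where "W = (\<Prod>c\<in>C. [:-c, 1:] :: real poly)"
    have polyW: "poly W t = omega C t" for t unfolding W_def omega_def poly_prod by simp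
    have degW: "degree W = card C"
    proof -
      have "degree W = (\<Sum>c\<in>C. degree [:-c, 1:: real:])"
        unfolding W_def by (rule degree_prod_sum_eq) simp
      then show ?thesis by simp
    qed
    have cz: "\<forall>j. coeff W j \<noteq> 0 \<longrightarrow> Suc j < k"
    proof (intro allI impI)
      fix j assume "coeff W j \<noteq> 0"
      then have "j \<le> card C" using degW le_degree by metis
      then show "Suc j < k" using small by simp
    qed
    have WN: "((\<lambda>t. omega C t * N t) has_integral 0) {lo..hi}"
    proof -
      have "((\<lambda>t. poly W t * N t) has_integral (\<Sum>l=1..k+1. pint W (card C) (a l) - pint W (card C) (b l))) {lo..hi}"
        unfolding N_def by (rule rep[OF _ ina inb]) (use pint_deriv[of W "card C"] degW in auto)
      then show ?thesis using pint_ortho[OF ps cz] by (simp add: polyW)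
    qed
    define K where "K = C \<union> a ` {1..k+1} \<union> b ` {1..k+1} \<union> {lo, hi}"
    have finK: "finite K" using fin by (simp add: K_def)
    have Fpos: "omega C t * N t \<ge> 0" for t using NW'[of t] by (simp add: mult.commute)
    have Fint: "(\<lambda>t. omega C t * N t) integrable_on {lo..hi}" using WN by blast
    have Fint0: "integral {lo..hi} (\<lambda>t. omega C t * N t) = 0" using WN by (rule integral_unique)
    have Nz: "N t0 = 0" if t0: "t0 \<in> {lo..hi} - K" for t0
    proof -
      obtain \<delta> where dpos: "\<delta> > 0" and dK: "\<forall>x\<in>K. x \<noteq> t0 \<longrightarrow> \<delta> \<le> dist t0 x"
        using finite_set_avoid[OF finK, of t0] by blast
      have far: "\<delta> \<le> \<bar>t0 - x\<bar>" if "x \<in> K" for x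
      proof -
        have "x \<noteq> t0" using that t0 by blast
        then show ?thesis using dK that by (simp add: dist_real_def)
      qed
      define u where "u = t0 - \<delta>/2"
      define v where "v = t0 + \<delta>/2"
      have uv: "u < v" using dpos by (simp add: u_def v_def)
      have lou: "lo \<le> u"
      proof -
        have "\<delta> \<le> \<bar>t0 - lo\<bar>" using far by (simp add: K_def)
        then show ?thesis using t0 dpos by (simp add: u_def)
      qed
      have vhi: "v \<le> hi"
      proof -
        have "\<delta> \<le> \<bar>t0 - hi\<bar>" using far by (simp add: K_def)
        then show ?thesis using t0 dpos by (simp add: v_def)
      qed
      have Nconst: "N t = N t0" if t: "t \<in> {u..v}" for t
        unfolding N_def
      proof (intro sum.cong refl)
        fix l assume l: "l \<in> {1..k+1}"
        have ha: "\<delta> \<le> \<bar>t0 - a l\<bar>" and hb: "\<delta> \<le> \<bar>t0 - b l\<bar>"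
          using far l by (auto simp: K_def)
        have "t0 - \<delta>/2 \<le> t" "t \<le> t0 + \<delta>/2" using t unfolding u_def v_def by auto
        then have "\<bar>t - t0\<bar> \<le> \<delta>/2" by (smt (verit))
        then have "(t \<le> a l \<longleftrightarrow> t0 \<le> a l) \<and> (t \<le> b l \<longleftrightarrow> t0 \<le> b l)" using ha hb dpos by linarith
        then show "dd (a l) (b l) t = dd (a l) (b l) t0" by (simp add: dd_def)
      qed
      have sub: "{u..v} \<subseteq> {lo..hi}" using lou vhi by auto
      have Fint': "(\<lambda>t. omega C t * N t) integrable_on {u..v}"
        using integrable_subinterval_real[OF Fint sub] .
      have "integral {u..v} (\<lambda>t. omega C t * N t) \<le> integral {lo..hi} (\<lambda>t. omega C t * N t)"
        using integral_subset_le[OF sub Fint' Fint] Fpos by blast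
      moreover have "integral {u..v} (\<lambda>t. omega C t * N t) \<ge> 0"
        using integral_nonneg[OF Fint'] Fpos by blast
      ultimately have "integral {u..v} (\<lambda>t. omega C t * N t) = 0" using Fint0 by simp
      then have "((\<lambda>t. omega C t * N t) has_integral 0) {u..v}"
        using Fint' by (metis has_integral_integral)
      then have G: "((\<lambda>t. omega C t * N t0) has_integral 0) (cbox u v)"
        unfolding cbox_interval by (rule has_integral_eq[rotated]) (simp add: Nconst)
      have "omega C t0 * N t0 = 0"
      proof (rule has_integral_0_cbox_imp_0[OF _ _ G])
        show "continuous_on (cbox u v) (\<lambda>t. omega C t * N t0)"
          unfolding omega_def by (intro continuous_intros)
        show "\<And>x. x \<in> box u v \<Longrightarrow> 0 \<le> omega C x * N t0"
        proof -
          fix x assume "x \<in> box u v"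
          then have "x \<in> {u..v}" by (simp add: box_real)
          then show "0 \<le> omega C x * N t0" using Fpos[of x] Nconst[of x] by simp
        qed
        show "box u v \<noteq> {}" using uv by (simp add: box_real)
        show "t0 \<in> cbox u v" using dpos by (simp add: cbox_interval u_def v_def)
      qed
      moreover have "omega C t0 \<noteq> 0" using t0 fin by (simp add: omega_def prod_zero_iff K_def)
      ultimately show ?thesis by simp
    qed
    have "((\<lambda>t. D 1 t * N t) has_integral 0) {lo..hi}"
      by (rule has_integral_spike_finite[OF finK _ has_integral_0]) (simp add: Nz)
    then have "S = 0" using gN by (rule has_integral_unique[symmetric])
    then show ?thesis by simp
  qed
  then show ?thesis using S_eq by simp
qed


end
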